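(* For $0<|q|<1$, \[ \frac{f_1^2f_4^2f_{10}^2}{qf_2^2f_5^2f_{20}^2} - \frac{f_2^4f_{20}^2}{f_4^2f_{10}^4} = \frac{f_1^3f_5}{qf_2f_{10}^3}. \]
   Context: For $m\in\mathbb{N}$ and $|q|<1$, $f_m:=\prod_{n\ge1}(1-q^{mn})$. *)

theory Defs
  imports "HOL-Analysis.Analysis"
begin

definition qf :: "nat \<Rightarrow> complex \<Rightarrow> complex" where
  "qf m q = (\<Prod>n. 1 - q ^ (m * Suc n))"

end

theory Submission
  imports Defs
begin

definition poch :: "complex \<Rightarrow> complex \<Rightarrow> complex" where
  "poch x r = (\<Prod>n. 1 - x * r ^ n)"

lemma poch_conv:
  fixes x r :: complex
  assumes "norm r < 1"
  shows "convergent_prod (\<lambda>n. 1 - x * r ^ n)"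
proof -
  have "summable (\<lambda>n. norm x * norm r ^ n)"
    using assms by (intro summable_mult summable_geometric) auto
  moreover have "(\<lambda>n. norm ((1 - x * r ^ n) - 1)) = (\<lambda>n. norm x * norm r ^ n)"
    by (simp add: fun_eq_iff norm_mult norm_power)
  ultimately have "summable (\<lambda>n. norm ((1 - x * r ^ n) - 1))" by simp
  thus ?thesis
    by (intro abs_convergent_prod_imp_convergent_prod summable_imp_abs_convergent_prod)
qed

lemma poch_lim:
  assumes "norm r < 1"
  shows "(\<lambda>N. \<Prod>n<N. 1 - x * r ^ n) \<longlonglongrightarrow> poch x r"
proof -
  have "(\<lambda>N. \<Prod>n\<le>N. 1 - x * r ^ n) \<longlonglongrightarrow> poch x r"
    unfolding poch_def by (rule convergent_prod_LIMSEQ[OF poch_conv[OF assms]])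
  hence "(\<lambda>N. \<Prod>n<Suc N. 1 - x * r ^ n) \<longlonglongrightarrow> poch x r"
    by (simp add: lessThan_Suc_atMost)
  thus ?thesis by (rule LIMSEQ_imp_Suc)
qed

lemma poch_nz:
  assumes "norm r < 1" "\<And>n. x * r ^ n \<noteq> 1"
  shows "poch x r \<noteq> 0"
  unfolding poch_def using assms(2) by (intro prodinf_nonzero poch_conv assms(1)) auto

lemma poch_lim_mult:
  assumes "norm r < 1" "c > 0"
  shows "(\<lambda>N. \<Prod>n<c*N. 1 - x * r ^ n) \<longlonglongrightarrow> poch x r"
proof -
  have "strict_mono (\<lambda>N::nat. c * N)" using assms(2) by (auto simp: strict_mono_def)
  from LIMSEQ_subseq_LIMSEQ[OF poch_lim[OF assms(1)] this] show ?thesis by (simp add: o_def)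
qed

lemma poch_split:
  assumes "norm r < 1" "c > 0"
  shows "poch x r = (\<Prod>k<c. poch (x * r ^ k) (r ^ c))"
proof -
  have nr: "norm (r ^ c) < 1" using assms by (simp add: norm_power power_less_one_iff)
  have eq: "(\<Prod>n<c*N. 1 - x * r ^ n) = (\<Prod>k<c. \<Prod>m<N. 1 - (x * r ^ k) * (r ^ c) ^ m)" for N
  proof -
    have "(\<Prod>n<c*N. 1 - x * r ^ n) = (\<Prod>m<N. \<Prod>n\<in>{m*c..<m*c+c}. 1 - x * r ^ n)"
      using prod.nat_group[of "\<lambda>n. 1 - x * r ^ n" c N] by (simp add: mult.commute)
    also have "\<dots> = (\<Prod>m<N. \<Prod>k<c. 1 - (x * r ^ k) * (r ^ c) ^ m)"
    proof (rule prod.cong[OF refl])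
      fix m
      have "(\<Prod>n\<in>{m*c..<m*c+c}. 1 - x * r ^ n) = (\<Prod>k<c. 1 - x * r ^ (m*c+k))"
        by (rule prod.reindex_bij_witness[where j="\<lambda>n. n - m*c" and i="\<lambda>k. m*c+k"]) auto
      also have "\<dots> = (\<Prod>k<c. 1 - (x * r ^ k) * (r ^ c) ^ m)"
        by (intro prod.cong refl) (simp add: power_add power_mult mult_ac)
      finally show "(\<Prod>n\<in>{m*c..<m*c+c}. 1 - x * r ^ n) = (\<Prod>k<c. 1 - (x * r ^ k) * (r ^ c) ^ m)" .
    qed
    also have "\<dots> = (\<Prod>k<c. \<Prod>m<N. 1 - (x * r ^ k) * (r ^ c) ^ m)"
      by (rule prod.swap)
    finally show ?thesis .
  qed
  have l1: "(\<lambda>N. \<Prod>k<c. \<Prod>m<N. 1 - (x * r ^ k) * (r ^ c) ^ m) \<longlonglongrightarrow> (\<Prod>k<c. poch (x * r ^ k) (r ^ c))"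
    by (intro tendsto_prod poch_lim nr)
  have l2: "(\<lambda>N. \<Prod>k<c. \<Prod>m<N. 1 - (x * r ^ k) * (r ^ c) ^ m) \<longlonglongrightarrow> poch x r"
    using poch_lim_mult[OF assms, of x] by (simp add: eq)
  show ?thesis using LIMSEQ_unique[OF l2 l1] .
qed

lemma poch_double:
  assumes "norm r < 1"
  shows "poch x r * poch (-x) r = poch (x^2) (r^2)"
proof -
  have nr: "norm (r ^ 2) < 1" using assms by (simp add: norm_power power_less_one_iff)
  have "(\<lambda>N. (\<Prod>n<N. 1 - x * r ^ n) * (\<Prod>n<N. 1 - (-x) * r ^ n)) \<longlonglongrightarrow> poch x r * poch (-x) r"
    by (intro tendsto_mult poch_lim assms)
  moreover have "(\<Prod>n<N. 1 - x * r ^ n) * (\<Prod>n<N. 1 - (-x) * r ^ n) = (\<Prod>n<N. 1 - x^2 * (r^2) ^ n)" for N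
  proof -
    have "(1 - x * r ^ n) * (1 - (-x) * r ^ n) = 1 - x^2 * (r^2) ^ n" for n
    proof -
      have "(r^2)^n = (r^n)^2" by (metis power_mult mult.commute)
      thus ?thesis by (simp add: power2_eq_square algebra_simps)
    qed
    thus ?thesis by (simp add: prod.distrib[symmetric])
  qed
  ultimately have "(\<lambda>N. \<Prod>n<N. 1 - x^2 * (r^2) ^ n) \<longlonglongrightarrow> poch x r * poch (-x) r" by simp
  from LIMSEQ_unique[OF this poch_lim[OF nr]] show ?thesis .
qed

lemma qf_poch: "qf m q = poch (q^m) (q^m)"
  unfolding qf_def poch_def by (intro prodinf_cong) (simp add: power_mult[symmetric] power_add[symmetric] mult.commute)

definition Pp :: "complex \<Rightarrow> nat \<Rightarrow> complex" where
  "Pp p m = (\<Prod>j<m. 1 - p * p ^ j)"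

lemma Pp_0[simp]: "Pp p 0 = 1" by (simp add: Pp_def)
lemma Pp_Suc: "Pp p (Suc m) = Pp p m * (1 - p ^ Suc m)" by (simp add: Pp_def)

lemma pow_ne_1:
  fixes p :: complex
  assumes "norm p < 1" "k > 0"
  shows "p ^ k \<noteq> 1"
proof
  assume "p ^ k = 1"
  hence "norm p ^ k = 1" by (metis norm_one norm_power)
  moreover have "norm p ^ k < 1" using assms by (simp add: power_less_one_iff)
  ultimately show False by simp
qed

lemma Pp_nz: "norm p < 1 \<Longrightarrow> Pp p m \<noteq> 0"
proof (induction m)
  case (Suc m)
  have "1 - p ^ Suc m \<noteq> 0" using pow_ne_1[OF Suc.prems, of "Suc m"] by simp
  thus ?case using Suc.IH[OF Suc.prems] by (simp add: Pp_Suc)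
qed simp

lemma Pp_lim: "norm p < 1 \<Longrightarrow> Pp p \<longlonglongrightarrow> poch p p"
  unfolding Pp_def by (rule poch_lim)

definition Qb :: "complex \<Rightarrow> nat \<Rightarrow> nat \<Rightarrow> complex" where
  "Qb p m i = (if i \<le> m then Pp p m / (Pp p i * Pp p (m - i)) else 0)"

lemma Qb_0[simp]: "norm p < 1 \<Longrightarrow> Qb p m 0 = 1" by (simp add: Qb_def Pp_nz)
lemma Qb_gt[simp]: "m < i \<Longrightarrow> Qb p m i = 0" by (simp add: Qb_def)
lemma Qb_diag[simp]: "norm p < 1 \<Longrightarrow> Qb p m m = 1" by (simp add: Qb_def Pp_nz)

lemma Qb_Suc1:
  assumes "norm p < 1"
  shows "Qb p (Suc m) (Suc i) = Qb p m i + p ^ Suc i * Qb p m (Suc i)"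
proof (cases "i < m")
  case True
  then obtain d where m: "m = i + d + 1" by (metis add.commute add_Suc less_imp_Suc_add plus_1_eq_Suc)
  define A where "A = Pp p i"
  define B where "B = Pp p d"
  define C where "C = Pp p (i + d + 1)"
  define x where "x = p ^ Suc i"
  define y where "y = p ^ Suc d"
  have nz: "A \<noteq> 0" "B \<noteq> 0" "C \<noteq> 0" "1 - x \<noteq> 0" "1 - y \<noteq> 0"
    using Pp_nz[OF assms] pow_ne_1[OF assms, of "Suc i"] pow_ne_1[OF assms, of "Suc d"]
    by (auto simp: A_def B_def C_def x_def y_def simp del: power_Suc)
  have e1: "Pp p (Suc m) = C * (1 - x * y)"
  proof -
    have "x * y = p ^ Suc m" by (simp add: x_def y_def m power_add[symmetric])
    thus ?thesis by (simp add: Pp_Suc C_def m)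
  qed
  have e2: "Pp p (Suc i) = A * (1 - x)" by (simp add: A_def x_def Pp_Suc)
  have e3: "Pp p (Suc d) = B * (1 - y)" by (simp add: B_def y_def Pp_Suc)
  have "Qb p (Suc m) (Suc i) = Pp p (Suc m) / (Pp p (Suc i) * Pp p (Suc d))"
    using m by (simp add: Qb_def)
  hence 1: "Qb p (Suc m) (Suc i) = C * (1 - x * y) / (A * (1 - x) * (B * (1 - y)))"
    by (simp only: e1 e2 e3)
  have "Qb p m i = Pp p (i + d + 1) / (Pp p i * Pp p (Suc d))"
    using m by (simp add: Qb_def)
  hence 2: "Qb p m i = C / (A * (B * (1 - y)))"
    by (simp only: e3 C_def A_def)
  have "Qb p m (Suc i) = Pp p (i + d + 1) / (Pp p (Suc i) * Pp p d)"
    using m by (simp add: Qb_def)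
  hence 3: "Qb p m (Suc i) = C / (A * (1 - x) * B)"
    by (simp only: e2 C_def B_def)
  note 1 2 3
  moreover have "C * (1 - x * y) / (A * (1 - x) * (B * (1 - y))) = C / (A * (B * (1 - y))) + x * (C / (A * (1 - x) * B))"
  proof -
    define u where "u = 1 - x"
    define w where "w = 1 - y"
    have x: "x = 1 - u" and y: "y = 1 - w" by (simp_all add: u_def w_def)
    have "u \<noteq> 0" "w \<noteq> 0" using nz by (simp_all add: u_def w_def)
    hence "C * (1 - (1 - u) * (1 - w)) / (A * u * (B * w)) = C / (A * (B * w)) + (1 - u) * (C / (A * u * B))"
      using nz by (simp add: field_simps)
    thus ?thesis by (simp add: x y)
  qed
  ultimately show ?thesis by (simp add: x_def)
next
  case False
  thus ?thesis using assms by (cases "i = m") auto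
qed

lemma Qb_Suc2:
  assumes "norm p < 1"
  shows "Qb p (Suc m) (Suc i) = p ^ (m - i) * Qb p m i + Qb p m (Suc i)"
proof (cases "i < m")
  case True
  then obtain d where m: "m = i + d + 1" by (metis add.commute add_Suc less_imp_Suc_add plus_1_eq_Suc)
  define A where "A = Pp p i"
  define B where "B = Pp p d"
  define C where "C = Pp p (i + d + 1)"
  define x where "x = p ^ Suc i"
  define y where "y = p ^ Suc d"
  have nz: "A \<noteq> 0" "B \<noteq> 0" "C \<noteq> 0" "1 - x \<noteq> 0" "1 - y \<noteq> 0"
    using Pp_nz[OF assms] pow_ne_1[OF assms, of "Suc i"] pow_ne_1[OF assms, of "Suc d"]
    by (auto simp: A_def B_def C_def x_def y_def simp del: power_Suc)
  have e1: "Pp p (Suc m) = C * (1 - x * y)"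
  proof -
    have "x * y = p ^ Suc m" by (simp add: x_def y_def m power_add[symmetric])
    thus ?thesis by (simp add: Pp_Suc C_def m)
  qed
  have e2: "Pp p (Suc i) = A * (1 - x)" by (simp add: A_def x_def Pp_Suc)
  have e3: "Pp p (Suc d) = B * (1 - y)" by (simp add: B_def y_def Pp_Suc)
  have md: "m - i = Suc d" using m by simp
  have "Qb p (Suc m) (Suc i) = Pp p (Suc m) / (Pp p (Suc i) * Pp p (Suc d))"
    using m by (simp add: Qb_def)
  hence 1: "Qb p (Suc m) (Suc i) = C * (1 - x * y) / (A * (1 - x) * (B * (1 - y)))"
    by (simp only: e1 e2 e3)
  have "Qb p m i = Pp p (i + d + 1) / (Pp p i * Pp p (Suc d))"
    using m by (simp add: Qb_def)
  hence 2: "Qb p m i = C / (A * (B * (1 - y)))"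
    by (simp only: e3 C_def A_def)
  have "Qb p m (Suc i) = Pp p (i + d + 1) / (Pp p (Suc i) * Pp p d)"
    using m by (simp add: Qb_def)
  hence 3: "Qb p m (Suc i) = C / (A * (1 - x) * B)"
    by (simp only: e2 C_def B_def)
  note 1 2 3
  moreover have "C * (1 - x * y) / (A * (1 - x) * (B * (1 - y))) = y * (C / (A * (B * (1 - y)))) + C / (A * (1 - x) * B)"
  proof -
    define u where "u = 1 - x"
    define w where "w = 1 - y"
    have x: "x = 1 - u" and y: "y = 1 - w" by (simp_all add: u_def w_def)
    have "u \<noteq> 0" "w \<noteq> 0" using nz by (simp_all add: u_def w_def)
    hence "C * (1 - (1 - u) * (1 - w)) / (A * u * (B * w)) = (1 - w) * (C / (A * (B * w))) + C / (A * u * B)"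
      using nz by (simp add: field_simps)
    thus ?thesis by (simp add: x y)
  qed
  ultimately show ?thesis by (simp add: y_def md)
next
  case False
  thus ?thesis using assms by (cases "i = m") auto
qed

definition Rr :: "real \<Rightarrow> nat \<Rightarrow> real" where
  "Rr a i = (\<Prod>j<i. 1 - a ^ Suc j)"

lemma mul_pow_lt1: "0 \<le> (a::real) \<Longrightarrow> a < 1 \<Longrightarrow> a * a ^ j < 1"
proof -
  assume "0 \<le> a" "a < 1"
  hence "a * a ^ j \<le> a * 1" by (intro mult_left_mono power_le_one) auto
  thus ?thesis using \<open>a < 1\<close> by simp
qed

lemma Rr_Suc: "Rr a (Suc i) = Rr a i * (1 - a ^ Suc i)" by (simp add: Rr_def)

lemma Rr_pos: "0 \<le> a \<Longrightarrow> a < 1 \<Longrightarrow> Rr a i > 0"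
  unfolding Rr_def by (intro prod_pos) (auto simp: mul_pow_lt1)

lemma Qb_bound:
  assumes "norm p < 1"
  shows "norm (Qb p m i) \<le> 1 / Rr (norm p) i"
proof (induction m arbitrary: i)
  case 0
  show ?case
  proof (cases i)
    case 0 thus ?thesis using assms by (simp add: Rr_def)
  next
    case (Suc j) thus ?thesis using Rr_pos[of "norm p" i] assms by simp
  qed
next
  case (Suc m)
  show ?case
  proof (cases i)
    case 0 thus ?thesis using assms by (simp add: Rr_def)
  next
    case (Suc j)
    have "norm (Qb p (Suc m) (Suc j)) \<le> norm (Qb p m j) + norm p ^ Suc j * norm (Qb p m (Suc j))"
      unfolding Qb_Suc1[OF assms] by (metis norm_mult norm_power norm_triangle_ineq)
    also have "\<dots> \<le> 1 / Rr (norm p) j + norm p ^ Suc j * (1 / Rr (norm p) (Suc j))"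
      by (intro add_mono mult_left_mono Suc.IH) auto
    also have "\<dots> = 1 / Rr (norm p) (Suc j)"
    proof -
      have "Rr (norm p) j > 0" "1 - norm p ^ Suc j > 0"
        using Rr_pos[of "norm p" j] assms by (auto simp: mul_pow_lt1)
      thus ?thesis by (simp add: Rr_Suc field_simps)
    qed
    finally show ?thesis using Suc by simp
  qed
qed

lemma Rr_lower:
  assumes "0 \<le> a" "a < 1"
  shows "\<exists>L>0. \<forall>i. L \<le> Rr a i"
proof -
  define f where "f j = 1 - a ^ Suc j" for j
  have "summable (\<lambda>j. a * a ^ j)" using assms by (intro summable_mult summable_geometric) auto
  moreover have "(\<lambda>j. norm (f j - 1)) = (\<lambda>j. a * a ^ j)" using assms by (auto simp: f_def fun_eq_iff)
  ultimately have "summable (\<lambda>j. norm (f j - 1))" by simp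
  hence cp: "convergent_prod f"
    by (intro abs_convergent_prod_imp_convergent_prod summable_imp_abs_convergent_prod)
  have fpos: "f j > 0" for j using assms by (auto simp: f_def mul_pow_lt1)
  have L: "prodinf f > 0" by (rule less_0_prodinf[OF cp fpos])
  have "prod f {..<i} \<ge> prodinf f" for i
    by (rule prod_ge_prodinf) (use cp fpos assms in \<open>auto simp: f_def less_imp_le convergent_prod_has_prod\<close>)
  hence "\<forall>i. prodinf f \<le> Rr a i" by (simp add: Rr_def f_def)
  with L show ?thesis by blast
qed

lemma Qb_bound':
  assumes "norm p < 1"
  shows "\<exists>B. \<forall>m i. norm (Qb p m i) \<le> B"
proof -
  obtain L where L: "L > 0" "\<And>i. L \<le> Rr (norm p) i" using Rr_lower[of "norm p"] assms by auto
  have "norm (Qb p m i) \<le> 1 / L" for m i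
  proof -
    have "norm (Qb p m i) \<le> 1 / Rr (norm p) i" by (rule Qb_bound[OF assms])
    also have "\<dots> \<le> 1 / L" using L by (intro divide_left_mono) (auto intro: mult_pos_pos less_le_trans[OF L(1) L(2)])
    finally show ?thesis .
  qed
  thus ?thesis by blast
qed

definition tri :: "int \<Rightarrow> nat" where
  "tri z = nat (z * (z - 1) div 2)"

lemma tri2: "2 * int (tri z) = z * (z - 1)"
proof -
  have ev: "even (z * (z - 1))" by (cases "even z") auto
  have nn: "z * (z - 1) \<ge> 0"
  proof (cases "z \<ge> 1")
    case True thus ?thesis by simp
  next
    case False hence "z \<le> 0" by simp
    thus ?thesis by (intro mult_nonpos_nonpos) auto
  qed
  have "int (tri z) = z * (z - 1) div 2" unfolding tri_def using nn by simp
  thus ?thesis using ev by simp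
qed

lemma tri_Suc: "int (tri (z + 1)) = int (tri z) + z"
proof -
  have "2 * int (tri (z + 1)) = 2 * int (tri z) + 2 * z"
    unfolding tri2 by (simp add: algebra_simps)
  thus ?thesis by linarith
qed

lemma pow_cong_int: "int a = int b \<Longrightarrow> p ^ a = p ^ b" by simp

lemma poly_mul1:
  fixes a :: "nat \<Rightarrow> complex"
  assumes "a (Suc N) = 0"
  shows "(\<Sum>i\<le>N. a i * c ^ i) * (c + w) = (\<Sum>i\<le>Suc N. ((if i = 0 then 0 else a (i - 1)) + w * a i) * c ^ i)"
proof -
  have "(\<Sum>i\<le>Suc N. ((if i = 0 then 0 else a (i - 1)) + w * a i) * c ^ i)
      = (\<Sum>i\<le>Suc N. (if i = 0 then 0 else a (i - 1)) * c ^ i) + w * (\<Sum>i\<le>Suc N. a i * c ^ i)"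
    by (simp add: sum.distrib sum_distrib_left algebra_simps)
  also have "(\<Sum>i\<le>Suc N. (if i = 0 then 0 else a (i - 1)) * c ^ i) = c * (\<Sum>i\<le>N. a i * c ^ i)"
    by (subst sum.atMost_Suc_shift) (simp add: sum_distrib_left mult_ac)
  also have "(\<Sum>i\<le>Suc N. a i * c ^ i) = (\<Sum>i\<le>N. a i * c ^ i)"
    using assms by simp
  finally show ?thesis by (simp add: algebra_simps)
qed

lemma poly_mul2:
  fixes a :: "nat \<Rightarrow> complex"
  assumes "a (Suc N) = 0"
  shows "(\<Sum>i\<le>N. a i * c ^ i) * (1 + w * c) = (\<Sum>i\<le>Suc N. (a i + w * (if i = 0 then 0 else a (i - 1))) * c ^ i)"
proof -
  have "(\<Sum>i\<le>Suc N. (a i + w * (if i = 0 then 0 else a (i - 1))) * c ^ i)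
      = (\<Sum>i\<le>Suc N. a i * c ^ i) + w * (\<Sum>i\<le>Suc N. (if i = 0 then 0 else a (i - 1)) * c ^ i)"
    by (simp add: sum.distrib sum_distrib_left algebra_simps)
  also have "(\<Sum>i\<le>Suc N. (if i = 0 then 0 else a (i - 1)) * c ^ i) = c * (\<Sum>i\<le>N. a i * c ^ i)"
    by (subst sum.atMost_Suc_shift) (simp add: sum_distrib_left mult_ac)
  also have "(\<Sum>i\<le>Suc N. a i * c ^ i) = (\<Sum>i\<le>N. a i * c ^ i)"
    using assms by simp
  finally show ?thesis by (simp add: algebra_simps)
qed

lemma fjtp_base:
  assumes "norm p < 1"
  shows "(\<Prod>j<m. c + p ^ Suc j) = (\<Sum>i\<le>m. Qb p m i * p ^ tri (int i - int m) * c ^ i)"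
proof (induction m)
  case 0
  show ?case using assms by (simp add: tri_def)
next
  case (Suc m)
  define a where "a i = Qb p m i * p ^ tri (int i - int m)" for i
  have a0: "a (Suc m) = 0" by (simp add: a_def)
  have "(\<Prod>j<Suc m. c + p ^ Suc j) = (\<Sum>i\<le>m. a i * c ^ i) * (c + p ^ Suc m)"
    using Suc by (simp add: a_def)
  also have "\<dots> = (\<Sum>i\<le>Suc m. ((if i = 0 then 0 else a (i - 1)) + p ^ Suc m * a i) * c ^ i)"
    by (rule poly_mul1[where a=a, OF a0])
  also have "\<dots> = (\<Sum>i\<le>Suc m. Qb p (Suc m) i * p ^ tri (int i - int (Suc m)) * c ^ i)"
  proof (intro sum.cong refl)
    fix i assume "i \<in> {..Suc m}"
    show "((if i = 0 then 0 else a (i - 1)) + p ^ Suc m * a i) * c ^ i = Qb p (Suc m) i * p ^ tri (int i - int (Suc m)) * c ^ i"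
    proof (cases i)
      case 0
      have "p ^ Suc m * p ^ tri (- int m) = p ^ tri (- int (Suc m))"
      proof -
        have "int (Suc m + tri (- int m)) = int (tri (- int (Suc m)))"
          using tri_Suc[of "- int (Suc m)"] by simp
        hence "p ^ (Suc m + tri (- int m)) = p ^ tri (- int (Suc m))" by (rule pow_cong_int)
        thus ?thesis by (simp only: power_add)
      qed
      thus ?thesis using 0 assms by (simp add: a_def)
    next
      case (Suc j)
      have e: "p ^ Suc m * p ^ tri (int (Suc j) - int m) = p ^ Suc j * p ^ tri (int j - int m)"
      proof -
        have "int (Suc m + tri (int (Suc j) - int m)) = int (Suc j + tri (int j - int m))"
          using tri_Suc[of "int j - int m"] by (simp add: algebra_simps)
        hence "p ^ (Suc m + tri (int (Suc j) - int m)) = p ^ (Suc j + tri (int j - int m))"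
          by (rule pow_cong_int)
        thus ?thesis by (simp only: power_add)
      qed
      have "(a j + p ^ Suc m * a (Suc j)) = Qb p m j * p ^ tri (int j - int m) + Qb p m (Suc j) * (p ^ Suc m * p ^ tri (int (Suc j) - int m))"
        unfolding a_def by (simp only: mult_ac)
      also have "\<dots> = Qb p m j * p ^ tri (int j - int m) + Qb p m (Suc j) * (p ^ Suc j * p ^ tri (int j - int m))"
        by (simp only: e)
      also have "\<dots> = (Qb p m j + p ^ Suc j * Qb p m (Suc j)) * p ^ tri (int j - int m)"
        by (simp only: algebra_simps)
      also have "\<dots> = Qb p (Suc m) (Suc j) * p ^ tri (int (Suc j) - int (Suc m))"
        by (simp add: Qb_Suc1[OF assms])
      finally show ?thesis using Suc by simp
    qed
  qed
  finally show ?case .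
qed

lemma fjtp:
  assumes "norm p < 1"
  shows "(\<Prod>j<n. 1 + c * p ^ j) * (\<Prod>j<m. c + p ^ Suc j) = (\<Sum>i\<le>n+m. Qb p (n+m) i * p ^ tri (int i - int m) * c ^ i)"
proof (induction n)
  case 0
  show ?case using fjtp_base[OF assms] by simp
next
  case (Suc n)
  define N where "N = n + m"
  define a where "a i = Qb p N i * p ^ tri (int i - int m)" for i
  have a0: "a (Suc N) = 0" by (simp add: a_def)
  have "(\<Prod>j<Suc n. 1 + c * p ^ j) * (\<Prod>j<m. c + p ^ Suc j) = (\<Sum>i\<le>N. a i * c ^ i) * (1 + p ^ n * c)"
    using Suc by (simp add: a_def N_def algebra_simps)
  also have "\<dots> = (\<Sum>i\<le>Suc N. (a i + p ^ n * (if i = 0 then 0 else a (i - 1))) * c ^ i)"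
    by (rule poly_mul2[where a=a, OF a0])
  also have "\<dots> = (\<Sum>i\<le>Suc N. Qb p (Suc N) i * p ^ tri (int i - int m) * c ^ i)"
  proof (intro sum.cong refl)
    fix i assume "i \<in> {..Suc N}"
    show "(a i + p ^ n * (if i = 0 then 0 else a (i - 1))) * c ^ i = Qb p (Suc N) i * p ^ tri (int i - int m) * c ^ i"
    proof (cases i)
      case 0
      thus ?thesis using assms by (simp add: a_def)
    next
      case (Suc j)
      have e: "p ^ n * Qb p N j * p ^ tri (int j - int m) = p ^ (N - j) * Qb p N j * p ^ tri (int (Suc j) - int m)"
      proof (cases "j \<le> N")
        case True
        have "int (n + tri (int j - int m)) = int (N - j + tri (int (Suc j) - int m))"
          using tri_Suc[of "int j - int m"] True by (simp add: algebra_simps N_def of_nat_diff)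
        hence "p ^ (n + tri (int j - int m)) = p ^ (N - j + tri (int (Suc j) - int m))"
          by (rule pow_cong_int)
        thus ?thesis by (simp add: power_add mult_ac)
      next
        case False thus ?thesis by simp
      qed
      have "a (Suc j) + p ^ n * a j = (p ^ (N - j) * Qb p N j + Qb p N (Suc j)) * p ^ tri (int (Suc j) - int m)"
        using e by (simp add: a_def algebra_simps)
      also have "\<dots> = Qb p (Suc N) (Suc j) * p ^ tri (int (Suc j) - int m)"
        by (simp add: Qb_Suc2[OF assms])
      finally show ?thesis using Suc by simp
    qed
  qed
  finally show ?case by (simp add: N_def)
qed

definition tt :: "complex \<Rightarrow> complex \<Rightarrow> int \<Rightarrow> complex" where
  "tt p c n = p ^ tri n * c powi n"

definition T :: "complex \<Rightarrow> complex \<Rightarrow> complex" where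
  "T p c = infsum (tt p c) UNIV"

lemma tri_nat_Suc': "tri (1 + int k) = tri (int k) + k"
proof -
  have "int (tri (int k + 1)) = int (tri (int k) + k)" using tri_Suc[of "int k"] by simp
  hence "tri (int k + 1) = tri (int k) + k" using of_nat_eq_iff by blast
  thus ?thesis by (simp add: add.commute)
qed

lemma tri_nat_Suc: "tri (int (Suc k)) = tri (int k) + k"
  using tri_nat_Suc' by simp

lemma gauss_summable:
  fixes a w :: real
  assumes "0 \<le> a" "a < 1" "0 \<le> w"
  shows "summable (\<lambda>k. a ^ tri (int k) * w ^ k)"
proof -
  have "(\<lambda>n. a ^ n * w) \<longlonglongrightarrow> 0 * w"
    by (intro tendsto_mult tendsto_const LIMSEQ_power_zero) (use assms in auto)
  hence "eventually (\<lambda>n. a ^ n * w < 1/2) sequentially"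
    by (intro order_tendstoD) auto
  then obtain N where N: "\<And>n. n \<ge> N \<Longrightarrow> a ^ n * w < 1/2"
    by (auto simp: eventually_sequentially)
  show ?thesis
  proof (rule summable_ratio_test[of "1/2" N])
    fix n assume "n \<ge> N"
    have "norm (a ^ tri (int (Suc n)) * w ^ Suc n) = (a ^ n * w) * (a ^ tri (int n) * w ^ n)"
      using assms by (simp add: tri_nat_Suc' power_add abs_mult mult_ac)
    also have "\<dots> \<le> 1/2 * (a ^ tri (int n) * w ^ n)"
      using N[OF \<open>n \<ge> N\<close>] assms by (intro mult_right_mono) auto
    also have "\<dots> = 1/2 * norm (a ^ tri (int n) * w ^ n)"
      using assms by simp
    finally show "norm (a ^ tri (int (Suc n)) * w ^ Suc n) \<le> 1/2 * norm (a ^ tri (int n) * w ^ n)" .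
  qed simp
qed

lemma tri_neg: "tri (- int k - 1) = tri (int (Suc k)) + Suc k"
proof -
  have "2 * int (tri (- int k - 1)) = 2 * int (tri (int (Suc k)) + Suc k)"
    unfolding of_nat_add tri2 by (simp add: algebra_simps tri2[of "int (Suc k)", simplified])
  thus ?thesis by simp
qed

lemma tt_pos_norm: "norm (tt p c (int k)) = norm p ^ tri (int k) * norm c ^ k"
  by (simp add: tt_def norm_mult norm_power)

lemma tt_neg_norm:
  assumes "c \<noteq> 0"
  shows "norm (tt p c (- int k - 1)) = norm p ^ tri (int (Suc k)) * (norm p / norm c) ^ Suc k"
proof -
  have "c powi (- int k - 1) = inverse (c ^ Suc k)"
    by (metis minus_diff_eq diff_minus_eq_add power_int_minus power_int_of_nat of_nat_Suc add.commute)
  hence "norm (tt p c (- int k - 1)) = norm p ^ tri (- int k - 1) / norm c ^ Suc k"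
    by (simp add: tt_def norm_mult norm_power norm_inverse divide_inverse)
  also have "\<dots> = norm p ^ tri (int (Suc k)) * (norm p / norm c) ^ Suc k"
    by (simp only: tri_neg power_add power_divide) simp
  finally show ?thesis .
qed

lemma tt_pos_summable:
  assumes "norm p < 1"
  shows "summable (\<lambda>k. norm (tt p c (int k)))"
  unfolding tt_pos_norm by (rule gauss_summable) (use assms in auto)

lemma tt_neg_summable:
  assumes "norm p < 1" "c \<noteq> 0"
  shows "summable (\<lambda>k. norm (tt p c (- int k - 1)))"
proof -
  have "summable (\<lambda>k. norm p ^ tri (int k) * (norm p / norm c) ^ k)"
    by (rule gauss_summable) (use assms in auto)
  hence "summable (\<lambda>k. norm p ^ tri (int (Suc k)) * (norm p / norm c) ^ Suc k)"
    by (subst summable_Suc_iff)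
  thus ?thesis unfolding tt_neg_norm[OF assms(2)] .
qed

lemma int_split: "(UNIV :: int set) = range int \<union> range (\<lambda>k. - int k - 1)"
proof -
  have "z \<in> range int \<union> range (\<lambda>k. - int k - 1)" for z :: int
  proof (cases "z \<ge> 0")
    case True thus ?thesis by (metis UnI1 nonneg_int_cases rangeI)
  next
    case False
    hence "z = - int (nat (- z - 1)) - 1" by simp
    thus ?thesis by blast
  qed
  thus ?thesis by blast
qed

lemma int_split_disj: "range int \<inter> range (\<lambda>k. - int k - 1) = {}"
  by auto

lemma tt_has_sum_parts:
  assumes "norm p < 1" "c \<noteq> 0"
  shows "(tt p c has_sum (suminf (\<lambda>k. tt p c (int k)) + suminf (\<lambda>k. tt p c (- int k - 1)))) UNIV"
proof -
  have s1: "summable (\<lambda>k. norm (tt p c (int k)))" by (rule tt_pos_summable[OF assms(1)])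
  have s2: "summable (\<lambda>k. norm (tt p c (- int k - 1)))" by (rule tt_neg_summable[OF assms])
  have h1: "((\<lambda>k. tt p c (int k)) has_sum suminf (\<lambda>k. tt p c (int k))) UNIV"
    by (rule norm_summable_imp_has_sum[OF s1 summable_sums[OF summable_norm_cancel[OF s1]]])
  have h2: "((\<lambda>k. tt p c (- int k - 1)) has_sum suminf (\<lambda>k. tt p c (- int k - 1))) UNIV"
    by (rule norm_summable_imp_has_sum[OF s2 summable_sums[OF summable_norm_cancel[OF s2]]])
  have i1: "inj (int :: nat \<Rightarrow> int)" by (auto simp: inj_def)
  have i2: "inj (\<lambda>k::nat. - int k - 1)" by (auto simp: inj_def)
  have g1: "(tt p c has_sum suminf (\<lambda>k. tt p c (int k))) (range int)"
    using h1 has_sum_reindex[OF i1, of "tt p c"] by (simp add: o_def)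
  have g2: "(tt p c has_sum suminf (\<lambda>k. tt p c (- int k - 1))) (range (\<lambda>k. - int k - 1))"
    using h2 has_sum_reindex[OF i2, of "tt p c"] by (simp add: o_def)
  from has_sum_Un_disjoint[OF g1 g2 int_split_disj] show ?thesis
    by (simp add: int_split[symmetric])
qed

lemma tt_summable: "norm p < 1 \<Longrightarrow> c \<noteq> 0 \<Longrightarrow> tt p c summable_on UNIV"
  using tt_has_sum_parts summable_on_def by blast

lemma T_sums:
  assumes "norm p < 1" "c \<noteq> 0"
  shows "(\<lambda>k. tt p c (int k) + tt p c (- int k - 1)) sums T p c"
proof -
  have s1: "summable (\<lambda>k. tt p c (int k))"
    by (rule summable_norm_cancel[OF tt_pos_summable[OF assms(1)]])
  have s2: "summable (\<lambda>k. tt p c (- int k - 1))"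
    by (rule summable_norm_cancel[OF tt_neg_summable[OF assms]])
  have "T p c = suminf (\<lambda>k. tt p c (int k)) + suminf (\<lambda>k. tt p c (- int k - 1))"
    unfolding T_def by (rule infsumI[OF tt_has_sum_parts[OF assms]])
  thus ?thesis using sums_add[OF summable_sums[OF s1] summable_sums[OF s2]] by simp
qed

lemma fin_jtp:
  assumes "norm p < 1" "c \<noteq> 0"
  shows "(\<Prod>j<n. (1 + c * p ^ j) * (1 + p ^ Suc j / c)) = (\<Sum>i\<le>2*n. Qb p (2*n) i * tt p c (int i - int n))"
proof -
  have f: "(\<Prod>j<n. 1 + c * p ^ j) * (\<Prod>j<n. c + p ^ Suc j) = (\<Sum>i\<le>n+n. Qb p (n+n) i * p ^ tri (int i - int n) * c ^ i)"
    by (rule fjtp[OF assms(1)])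
  have "(\<Prod>j<n. c + p ^ Suc j) = (\<Prod>j<n. c * (1 + p ^ Suc j / c))"
    using assms(2) by (intro prod.cong refl) (simp add: field_simps)
  also have "\<dots> = c ^ n * (\<Prod>j<n. 1 + p ^ Suc j / c)"
    by (simp add: prod.distrib)
  finally have g: "(\<Prod>j<n. c + p ^ Suc j) = c ^ n * (\<Prod>j<n. 1 + p ^ Suc j / c)" .
  have "(\<Prod>j<n. (1 + c * p ^ j) * (1 + p ^ Suc j / c)) = (\<Prod>j<n. 1 + c * p ^ j) * (\<Prod>j<n. c + p ^ Suc j) / c ^ n"
    unfolding prod.distrib g using assms(2) by simp
  also have "\<dots> = (\<Sum>i\<le>2*n. Qb p (2*n) i * p ^ tri (int i - int n) * c ^ i) / c ^ n"
    using f by (simp add: mult_2)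
  also have "\<dots> = (\<Sum>i\<le>2*n. Qb p (2*n) i * tt p c (int i - int n))"
    unfolding sum_divide_distrib
  proof (intro sum.cong refl)
    fix i
    have "c powi (int i - int n) = c ^ i / c ^ n"
      using assms(2) by (simp add: power_int_diff)
    thus "Qb p (2*n) i * p ^ tri (int i - int n) * c ^ i / c ^ n = Qb p (2*n) i * tt p c (int i - int n)"
      by (simp add: tt_def)
  qed
  finally show ?thesis .
qed

lemma sum_split_center:
  fixes F :: "nat \<Rightarrow> complex"
  shows "(\<Sum>i\<le>2*n. F i) = (\<Sum>k\<le>n. F (n + k)) + (\<Sum>k<n. F (n - Suc k))"
proof -
  have "{..2*n} = {..<n} \<union> {n..2*n}" by auto
  hence "(\<Sum>i\<le>2*n. F i) = sum F ({..<n} \<union> {n..2*n})" by simp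
  also have "\<dots> = (\<Sum>i<n. F i) + (\<Sum>i\<in>{n..2*n}. F i)"
    by (rule sum.union_disjoint) auto
  also have "(\<Sum>i\<in>{n..2*n}. F i) = (\<Sum>k\<le>n. F (n + k))"
    by (rule sum.reindex_bij_witness[where i="\<lambda>k. n + k" and j="\<lambda>i. i - n"]) auto
  also have "(\<Sum>i<n. F i) = (\<Sum>k<n. F (n - Suc k))"
    by (rule sum.nat_diff_reindex[symmetric])
  finally show ?thesis by simp
qed

definition aa :: "complex \<Rightarrow> complex \<Rightarrow> nat \<Rightarrow> nat \<Rightarrow> complex" where
  "aa p c k n = (if k \<le> n then Qb p (2*n) (n + k) * tt p c (int k) else 0)
              + (if k < n then Qb p (2*n) (n - Suc k) * tt p c (- int k - 1) else 0)"

lemma aa_suminf: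
  assumes "norm p < 1" "c \<noteq> 0"
  shows "(\<Sum>k. aa p c k n) = (\<Prod>j<n. (1 + c * p ^ j) * (1 + p ^ Suc j / c))"
proof -
  have "(\<Sum>k. aa p c k n) = (\<Sum>k\<le>n. aa p c k n)"
    by (rule suminf_finite) (auto simp: aa_def)
  also have "\<dots> = (\<Sum>k\<le>n. Qb p (2*n) (n + k) * tt p c (int k)) + (\<Sum>k\<le>n. (if k < n then Qb p (2*n) (n - Suc k) * tt p c (- int k - 1) else 0))"
    by (simp add: aa_def sum.distrib)
  also have "(\<Sum>k\<le>n. (if k < n then Qb p (2*n) (n - Suc k) * tt p c (- int k - 1) else 0)) = (\<Sum>k<n. Qb p (2*n) (n - Suc k) * tt p c (- int k - 1))"
    by (simp add: lessThan_Suc_atMost[symmetric])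
  also have "(\<Sum>k\<le>n. Qb p (2*n) (n + k) * tt p c (int k)) + (\<Sum>k<n. Qb p (2*n) (n - Suc k) * tt p c (- int k - 1))
      = (\<Sum>i\<le>2*n. Qb p (2*n) i * tt p c (int i - int n))"
  proof -
    have "(\<Sum>k<n. Qb p (2*n) (n - Suc k) * tt p c (- int k - 1)) = (\<Sum>k<n. Qb p (2*n) (n - Suc k) * tt p c (int (n - Suc k) - int n))"
    proof (intro sum.cong refl)
      fix k assume "k \<in> {..<n}"
      hence "int (n - Suc k) - int n = - int k - 1" by (simp add: of_nat_diff)
      thus "Qb p (2*n) (n - Suc k) * tt p c (- int k - 1) = Qb p (2*n) (n - Suc k) * tt p c (int (n - Suc k) - int n)"
        by (simp only:)
    qed
    thus ?thesis by (simp add: sum_split_center)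
  qed
  also have "\<dots> = (\<Prod>j<n. (1 + c * p ^ j) * (1 + p ^ Suc j / c))"
    by (rule fin_jtp[OF assms, symmetric])
  finally show ?thesis .
qed

lemma Pp_lim_comp:
  assumes "norm p < 1" "filterlim g sequentially sequentially"
  shows "(\<lambda>n. Pp p (g n)) \<longlonglongrightarrow> poch p p"
  using filterlim_compose[OF Pp_lim[OF assms(1)] assms(2)] by (simp add: o_def)

lemma jtp_lim:
  assumes "norm p < 1" "c \<noteq> 0"
  shows "(\<lambda>n. \<Prod>j<n. (1 + c * p ^ j) * (1 + p ^ Suc j / c) * (1 - p * p ^ j)) \<longlonglongrightarrow> T p c"
proof -
  define P where "P = poch p p"
  have Pnz: "P \<noteq> 0" unfolding P_def
    by (rule poch_nz[OF assms(1)]) (use pow_ne_1[OF assms(1)] in \<open>metis power_Suc zero_less_Suc\<close>)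
  obtain B where B: "\<And>m i. norm (Qb p m i) \<le> B" using Qb_bound'[OF assms(1)] by blast
  have B0: "B \<ge> 0" using B[of 0 0] norm_ge_zero[of "Qb p 0 0"] by linarith
  have lim2: "filterlim (\<lambda>n::nat. 2 * n) sequentially sequentially"
    by (intro filterlim_subseq) (auto simp: strict_mono_def)
  define b where "b k = P / (P * P) * tt p c (int k) + P / (P * P) * tt p c (- int k - 1)" for k
  have limit: "(\<lambda>n. aa p c k n) \<longlonglongrightarrow> b k" for k
  proof -
    have l1: "(\<lambda>n. Pp p (2 * n) / (Pp p (n + k) * Pp p (n - k))) \<longlonglongrightarrow> P / (P * P)"
      unfolding P_def
      by (intro tendsto_divide tendsto_mult Pp_lim_comp assms lim2 filterlim_add_const_nat_at_top filterlim_minus_const_nat_at_top)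
         (use Pnz P_def in auto)
    have l2: "(\<lambda>n. Pp p (2 * n) / (Pp p (n - Suc k) * Pp p (n + Suc k))) \<longlonglongrightarrow> P / (P * P)"
      unfolding P_def
      by (intro tendsto_divide tendsto_mult Pp_lim_comp assms lim2 filterlim_add_const_nat_at_top filterlim_minus_const_nat_at_top)
         (use Pnz P_def in auto)
    have "(\<lambda>n. Pp p (2 * n) / (Pp p (n + k) * Pp p (n - k)) * tt p c (int k)
             + Pp p (2 * n) / (Pp p (n - Suc k) * Pp p (n + Suc k)) * tt p c (- int k - 1)) \<longlonglongrightarrow> b k"
      unfolding b_def by (intro tendsto_add tendsto_mult l1 l2 tendsto_const)
    moreover have "eventually (\<lambda>n. Pp p (2 * n) / (Pp p (n + k) * Pp p (n - k)) * tt p c (int k)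
             + Pp p (2 * n) / (Pp p (n - Suc k) * Pp p (n + Suc k)) * tt p c (- int k - 1) = aa p c k n) sequentially"
    proof -
      have "Pp p (2 * n) / (Pp p (n + k) * Pp p (n - k)) * tt p c (int k)
             + Pp p (2 * n) / (Pp p (n - Suc k) * Pp p (n + Suc k)) * tt p c (- int k - 1) = aa p c k n"
        if "k < n" for n
      proof -
        have e1: "2 * n - (n + k) = n - k" by simp
        have e2: "2 * n - (n - Suc k) = n + Suc k" using that by simp
        show ?thesis using that by (simp add: aa_def Qb_def e1 e2 mult_ac)
      qed
      thus ?thesis by (rule eventually_mono[OF eventually_gt_at_top[of k]])
    qed
    ultimately show ?thesis by (rule Lim_transform_eventually)
  qed
  define M where "M k = B * norm (tt p c (int k)) + B * norm (tt p c (- int k - 1))" for k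
  have bound: "norm (aa p c k n) \<le> M k" for k n
  proof -
    have "norm (aa p c k n) \<le> norm (if k \<le> n then Qb p (2*n) (n + k) * tt p c (int k) else 0)
             + norm (if k < n then Qb p (2*n) (n - Suc k) * tt p c (- int k - 1) else 0)"
      unfolding aa_def by (rule norm_triangle_ineq)
    also have "\<dots> \<le> M k"
      unfolding M_def using B B0
      by (intro add_mono) (auto simp: norm_mult intro!: mult_right_mono)
    finally show ?thesis .
  qed
  have sM: "summable M"
    unfolding M_def by (intro summable_add summable_mult tt_pos_summable tt_neg_summable assms)
  have "(\<lambda>n. \<Sum>k. aa p c k n) \<longlonglongrightarrow> (\<Sum>k. b k)"
    using tannerys_theorem[where a="\<lambda>k n. aa p c k n" and b=b and M=M and F=sequentially] limit bound sM
    by (auto intro: always_eventually)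
  moreover have "(\<Sum>k. b k) = T p c * (P / (P * P))"
  proof -
    have "(\<lambda>k. (tt p c (int k) + tt p c (- int k - 1)) * (P / (P * P))) sums (T p c * (P / (P * P)))"
      by (rule sums_mult2[OF T_sums[OF assms]])
    thus ?thesis unfolding b_def by (simp add: algebra_simps sums_iff)
  qed
  ultimately have L: "(\<lambda>n. \<Prod>j<n. (1 + c * p ^ j) * (1 + p ^ Suc j / c)) \<longlonglongrightarrow> T p c * (P / (P * P))"
    using aa_suminf[OF assms] by simp
  have L2: "(\<lambda>n. (\<Prod>j<n. (1 + c * p ^ j) * (1 + p ^ Suc j / c)) * Pp p n) \<longlonglongrightarrow> T p c * (P / (P * P)) * P"
    by (intro tendsto_mult L) (use Pp_lim[OF assms(1)] P_def in simp)
  have E: "T p c * (P / (P * P)) * P = T p c" using Pnz by (simp add: field_simps)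
  have L3: "(\<lambda>n. (\<Prod>j<n. (1 + c * p ^ j) * (1 + p ^ Suc j / c)) * Pp p n) \<longlonglongrightarrow> T p c"
    using L2 unfolding E .
  have "(\<lambda>n. \<Prod>j<n. (1 + c * p ^ j) * (1 + p ^ Suc j / c) * (1 - p * p ^ j)) = (\<lambda>n. (\<Prod>j<n. (1 + c * p ^ j) * (1 + p ^ Suc j / c)) * Pp p n)"
    by (simp add: Pp_def prod.distrib)
  with L3 show ?thesis by simp
qed

lemma jtp:
  assumes "norm p < 1" "c \<noteq> 0"
  shows "T p c = poch (- c) p * poch (- (p / c)) p * poch p p"
proof -
  have "(\<lambda>n. (\<Prod>j<n. 1 - (- c) * p ^ j) * (\<Prod>j<n. 1 - (- (p / c)) * p ^ j) * (\<Prod>j<n. 1 - p * p ^ j))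
        \<longlonglongrightarrow> poch (- c) p * poch (- (p / c)) p * poch p p"
    by (intro tendsto_mult poch_lim assms)
  moreover have "(\<Prod>j<n. 1 - (- c) * p ^ j) * (\<Prod>j<n. 1 - (- (p / c)) * p ^ j) * (\<Prod>j<n. 1 - p * p ^ j)
      = (\<Prod>j<n. (1 + c * p ^ j) * (1 + p ^ Suc j / c) * (1 - p * p ^ j))" for n
    by (simp add: prod.distrib)
  ultimately have "(\<lambda>n. \<Prod>j<n. (1 + c * p ^ j) * (1 + p ^ Suc j / c) * (1 - p * p ^ j)) \<longlonglongrightarrow> poch (- c) p * poch (- (p / c)) p * poch p p"
    by simp
  from LIMSEQ_unique[OF jtp_lim[OF assms] this] show ?thesis .
qed

lemma has_sum_prod_family:
  fixes f g :: "'a \<Rightarrow> complex" and h :: "'b \<Rightarrow> complex"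
  assumes f: "f summable_on UNIV" and g: "h summable_on UNIV"
  shows "((\<lambda>(x,y). f x * h y) has_sum (infsum f UNIV * infsum h UNIV)) UNIV"
proof -
  have fa: "(\<lambda>x. norm (f x)) summable_on UNIV"
    using f summable_on_iff_abs_summable_on_complex by blast
  have ga: "(\<lambda>y. norm (h y)) summable_on UNIV"
    using g summable_on_iff_abs_summable_on_complex by blast
  define C where "C = infsum (\<lambda>y. norm (h y)) UNIV"
  have C0: "C \<ge> 0" unfolding C_def by (rule infsum_nonneg) auto
  have inner: "(\<lambda>y. norm (f x * h y)) summable_on UNIV" for x
    unfolding norm_mult by (rule summable_on_cmult_right[OF ga])
  have eqo: "(\<lambda>x. norm (infsum (\<lambda>y. norm (f x * h y)) UNIV)) = (\<lambda>x. norm (f x) * C)"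
  proof
    fix x
    have "infsum (\<lambda>y. norm (f x * h y)) UNIV = norm (f x) * C"
      unfolding norm_mult C_def by (rule infsum_cmult_right')
    thus "norm (infsum (\<lambda>y. norm (f x * h y)) UNIV) = norm (f x) * C" using C0 by simp
  qed
  have outer: "(\<lambda>x. norm (infsum (\<lambda>y. norm (f x * h y)) UNIV)) summable_on UNIV"
    unfolding eqo by (rule summable_on_cmult_left[OF fa])
  have "(\<lambda>z. norm ((\<lambda>(x,y). f x * h y) z)) summable_on Sigma UNIV (\<lambda>_. UNIV)"
    using Infinite_Sum.abs_summable_on_Sigma_iff[of "\<lambda>(x,y). f x * h y" UNIV "\<lambda>_. UNIV"] inner outer by simp
  hence s: "(\<lambda>(x,y). f x * h y) summable_on UNIV"
    using abs_summable_summable by force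
  have "infsum (\<lambda>(x,y). f x * h y) UNIV = infsum (\<lambda>x. infsum (\<lambda>y. f x * h y) UNIV) UNIV"
    using infsum_Sigma'_banach[of "\<lambda>x y. f x * h y" UNIV "\<lambda>_. UNIV"] s by simp
  also have "\<dots> = infsum (\<lambda>x. f x * infsum h UNIV) UNIV"
    by (simp add: infsum_cmult_right')
  also have "\<dots> = infsum f UNIV * infsum h UNIV"
    by (simp add: infsum_cmult_left')
  finally show ?thesis using has_sum_infsum[OF s] by simp
qed

lemma tt_powi: "tt p c n = p powi int (tri n) * c powi n"
  by (simp add: tt_def)

lemma tt2_powi: "tt (p^2) c n = p powi (2 * int (tri n)) * c powi n"
proof -
  have "(p^2) ^ tri n = p ^ (2 * tri n)" by (simp add: power_mult)
  also have "\<dots> = p powi (2 * int (tri n))" by (metis of_nat_mult of_nat_numeral power_int_of_nat)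
  finally show ?thesis by (simp add: tt_def)
qed

lemma powi_mul: "(p::complex) \<noteq> 0 \<Longrightarrow> p powi x * p powi y = p powi (x + y)"
  by (simp add: power_int_add)

lemma T_quasi:
  assumes "norm r < 1" "r \<noteq> 0" "z \<noteq> 0"
  shows "T r (r * z) = T r z / z"
proof -
  have "(tt r z has_sum T r z) UNIV" using tt_summable[OF assms(1,3)] T_def by (simp add: has_sum_infsum)
  hence "((\<lambda>n. tt r z n / z) has_sum (T r z / z)) UNIV" by (simp add: has_sum_cmult_left divide_inverse)
  moreover have "range (\<lambda>n::int. n + 1) = UNIV"
    by (metis UNIV_I diff_add_cancel image_eqI subsetI subset_antisym)
  moreover have inj: "inj (\<lambda>n::int. n + 1)" by (simp add: inj_def)
  ultimately have "((\<lambda>n. tt r z n / z) has_sum (T r z / z)) (range (\<lambda>n::int. n + 1))" by simp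
  hence "(((\<lambda>n. tt r z n / z) \<circ> (\<lambda>n. n + 1)) has_sum (T r z / z)) UNIV"
    unfolding has_sum_reindex[OF inj] .
  moreover have "((\<lambda>n. tt r z n / z) \<circ> (\<lambda>n. n + 1)) = tt r (r * z)"
  proof
    fix n :: int
    have "2 * int (tri (n + 1)) = 2 * (int (tri n) + n)" using tri_Suc by simp
    hence "int (tri (n + 1)) = int (tri n) + n" by simp
    hence "tt r z (n + 1) / z = r powi (int (tri n) + n) * (z powi n * z) / z"
      using assms by (simp add: tt_powi power_int_add)
    also have "\<dots> = r powi int (tri n) * (r powi n * z powi n)"
      using assms by (simp add: power_int_add)
    also have "\<dots> = tt r (r * z) n"
      by (simp add: tt_powi power_int_mult_distrib)
    finally show "((\<lambda>n. tt r z n / z) \<circ> (\<lambda>n. n + 1)) n = tt r (r * z) n" by simp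
  qed
  ultimately have "(tt r (r * z) has_sum (T r z / z)) UNIV" by simp
  thus ?thesis unfolding T_def by (rule infsumI)
qed

lemma T_inv:
  assumes "norm r < 1" "z \<noteq> 0"
  shows "T r (1 / z) = T r z / z"
proof -
  have "(tt r z has_sum T r z) UNIV" using tt_summable[OF assms(1,2)] T_def by (simp add: has_sum_infsum)
  hence "((\<lambda>n. tt r z n / z) has_sum (T r z / z)) UNIV" by (simp add: has_sum_cmult_left divide_inverse)
  moreover have "range (\<lambda>n::int. 1 - n) = UNIV"
  proof -
    { fix x :: int have "x \<in> range (\<lambda>n::int. 1 - n)" by (rule image_eqI[where x="1 - x"]) auto }
    thus ?thesis by blast
  qed
  moreover have inj: "inj (\<lambda>n::int. 1 - n)" by (simp add: inj_def)
  ultimately have "((\<lambda>n. tt r z n / z) has_sum (T r z / z)) (range (\<lambda>n::int. 1 - n))" by simp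
  hence "(((\<lambda>n. tt r z n / z) \<circ> (\<lambda>n. 1 - n)) has_sum (T r z / z)) UNIV"
    unfolding has_sum_reindex[OF inj] .
  moreover have "((\<lambda>n. tt r z n / z) \<circ> (\<lambda>n. 1 - n)) = tt r (1 / z)"
  proof
    fix n :: int
    have "2 * int (tri (1 - n)) = 2 * int (tri n)" unfolding tri2 by (simp add: algebra_simps)
    hence "tri (1 - n) = tri n" by simp
    hence "tt r z (1 - n) / z = r ^ tri n * (z powi (1 - n) / z)"
      by (simp add: tt_def)
    also have "z powi (1 - n) / z = (1 / z) powi n"
      using assms by (simp add: power_int_diff power_int_divide_distrib)
    finally show "((\<lambda>n. tt r z n / z) \<circ> (\<lambda>n. 1 - n)) n = tt r (1 / z) n" by (simp add: tt_def)
  qed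
  ultimately have "(tt r (1 / z) has_sum (T r z / z)) UNIV" by simp
  thus ?thesis unfolding T_def by (rule infsumI)
qed

lemma p2_powi: "((p::complex)^2) powi j = p powi (2 * j)"
  by (simp add: power_int_mult)

lemma int_pair_split:
  "range (\<lambda>(i::int, j::int). (i + j, i - j)) \<union> range (\<lambda>(i::int, j::int). (i + j + 1, i - j)) = UNIV"
proof -
  have "(m, n) \<in> range (\<lambda>(i::int, j::int). (i + j, i - j)) \<union> range (\<lambda>(i::int, j::int). (i + j + 1, i - j))" for m n :: int
  proof (cases "even (m + n)")
    case True
    define k where "k = (m + n) div 2"
    have k: "m + n = 2 * k" using True by (simp add: k_def)
    have "(m, n) = (\<lambda>(i, j). (i + j, i - j)) (k, k - n)" using k by simp
    thus ?thesis by blast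
  next
    case False
    define k where "k = (m + n) div 2"
    have k: "m + n = 2 * k + 1" using False unfolding k_def by presburger
    have "(m, n) = (\<lambda>(i, j). (i + j + 1, i - j)) (k, k - n)" using k by simp
    thus ?thesis by blast
  qed
  thus ?thesis by auto
qed

lemma int_pair_disj:
  "range (\<lambda>(i::int, j::int). (i + j, i - j)) \<inter> range (\<lambda>(i::int, j::int). (i + j + 1, i - j)) = {}"
proof -
  { fix i j i' j' :: int
    assume "(i + j, i - j) = (i' + j' + 1, i' - j')"
    hence "i + j = i' + j' + 1" "i - j = i' - j'" by simp_all
    hence "2 * i = 2 * i' + 1" by linarith
    hence False by presburger }
  thus ?thesis by fastforce
qed

lemma T_dup:
  assumes "norm p < 1" "p \<noteq> 0" "a \<noteq> 0" "b \<noteq> 0"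
  shows "T p a * T p b = T (p^2) (a * b) * T (p^2) (p * a / b) + a * (T (p^2) (p * a * b) * T (p^2) (p^2 * a / b))"
proof -
  have np2: "norm (p^2) < 1" using assms(1) by (simp add: norm_power power_less_one_iff)
  define h where "h = (\<lambda>(m, n). tt p a m * tt p b n)"
  define ge where "ge = (\<lambda>(i, j). tt (p^2) (a * b) i * tt (p^2) (p * a / b) j)"
  define go where "go = (\<lambda>z. a * (case z of (i, j) \<Rightarrow> tt (p^2) (p * a * b) i * tt (p^2) (p^2 * a / b) j))"
  define pe where "pe = (\<lambda>(i::int, j::int). (i + j, i - j))"
  define po where "po = (\<lambda>(i::int, j::int). (i + j + 1, i - j))"
  have H: "(h has_sum T p a * T p b) UNIV"
    unfolding h_def T_def by (intro has_sum_prod_family tt_summable assms)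
  have GE: "(ge has_sum T (p^2) (a * b) * T (p^2) (p * a / b)) UNIV"
    unfolding ge_def T_def by (intro has_sum_prod_family tt_summable np2) (use assms in auto)
  have GO: "(go has_sum a * (T (p^2) (p * a * b) * T (p^2) (p^2 * a / b))) UNIV"
    unfolding go_def T_def by (intro has_sum_cmult_right has_sum_prod_family tt_summable np2) (use assms in auto)
  have inje: "inj pe" unfolding pe_def by (auto simp: inj_def)
  have injo: "inj po" unfolding po_def by (auto simp: inj_def)
  have eqe: "h \<circ> pe = ge"
  proof
    fix z :: "int \<times> int"
    obtain i j where z: "z = (i, j)" by (cases z)
    have ex: "int (tri (i + j)) + int (tri (i - j)) = 2 * int (tri i) + 2 * int (tri j) + j"
    proof -
      have "2 * (int (tri (i + j)) + int (tri (i - j))) = 2 * (2 * int (tri i) + 2 * int (tri j) + j)"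
        by (simp only: distrib_left tri2) (simp add: algebra_simps)
      thus ?thesis by simp
    qed
    have L: "tt p a (i + j) * tt p b (i - j) = p powi (int (tri (i + j)) + int (tri (i - j))) * (a powi i * a powi j) * (b powi i / b powi j)"
      using assms by (simp add: tt_powi power_int_add power_int_diff)
    have R: "tt (p^2) (a * b) i * tt (p^2) (p * a / b) j = p powi (2 * int (tri i) + 2 * int (tri j) + j) * (a powi i * a powi j) * (b powi i / b powi j)"
      using assms by (simp add: tt2_powi power_int_add power_int_mult_distrib power_int_divide_distrib)
    show "(h \<circ> pe) z = ge z"
      unfolding z h_def ge_def pe_def using L R ex by simp
  qed
  have eqo: "h \<circ> po = go"
  proof
    fix z :: "int \<times> int"
    obtain i j where z: "z = (i, j)" by (cases z)
    have ex: "int (tri (i + j + 1)) + int (tri (i - j)) = 2 * int (tri i) + i + 2 * int (tri j) + 2 * j"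
    proof -
      have "2 * (int (tri (i + j + 1)) + int (tri (i - j))) = 2 * (2 * int (tri i) + i + 2 * int (tri j) + 2 * j)"
        by (simp only: distrib_left tri2) (simp add: algebra_simps)
      thus ?thesis by simp
    qed
    have L: "tt p a (i + j + 1) * tt p b (i - j) = p powi (int (tri (i + j + 1)) + int (tri (i - j))) * (a powi i * a powi j * a) * (b powi i / b powi j)"
      using assms by (simp add: tt_powi power_int_add power_int_diff)
    have R: "a * (tt (p^2) (p * a * b) i * tt (p^2) (p^2 * a / b) j) = p powi (2 * int (tri i) + i + 2 * int (tri j) + 2 * j) * (a powi i * a powi j * a) * (b powi i / b powi j)"
      using assms by (simp add: tt2_powi power_int_add power_int_mult_distrib power_int_divide_distrib p2_powi)
    show "(h \<circ> po) z = go z"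
      unfolding z h_def go_def po_def using L R ex by simp
  qed
  have HE: "(h has_sum T (p^2) (a * b) * T (p^2) (p * a / b)) (range pe)"
    unfolding has_sum_reindex[OF inje] eqe by (rule GE)
  have HO: "(h has_sum a * (T (p^2) (p * a * b) * T (p^2) (p^2 * a / b))) (range po)"
    unfolding has_sum_reindex[OF injo] eqo by (rule GO)
  have "(h has_sum (T (p^2) (a * b) * T (p^2) (p * a / b) + a * (T (p^2) (p * a * b) * T (p^2) (p^2 * a / b)))) (range pe \<union> range po)"
    by (rule has_sum_Un_disjoint[OF HE HO]) (use int_pair_disj in \<open>simp add: pe_def po_def\<close>)
  hence "(h has_sum (T (p^2) (a * b) * T (p^2) (p * a / b) + a * (T (p^2) (p * a * b) * T (p^2) (p^2 * a / b)))) UNIV"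
    using int_pair_split by (simp add: pe_def po_def)
  thus ?thesis using has_sum_unique[OF H] by simp
qed

definition DD :: "complex \<Rightarrow> complex \<Rightarrow> complex \<Rightarrow> complex" where
  "DD p x y = T p (- (x * y)) * T p (- (x / y))"

lemma DD_form:
  assumes "norm p < 1" "p \<noteq> 0" "x \<noteq> 0" "y \<noteq> 0"
  shows "DD p x y = T (p^2) (x^2) * T (p^2) (p * y^2) - (x / y) * (T (p^2) (p * x^2) * T (p^2) (y^2))"
proof -
  have np2: "norm (p^2) < 1" using assms(1) by (simp add: norm_power power_less_one_iff)
  have d: "DD p x y = T (p^2) (x^2) * T (p^2) (p * y^2) + (- (x * y)) * (T (p^2) (p * x^2) * T (p^2) (p^2 * y^2))"
  proof -
    have "DD p x y = T (p^2) ((- (x * y)) * (- (x / y))) * T (p^2) (p * (- (x * y)) / (- (x / y)))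
         + (- (x * y)) * (T (p^2) (p * (- (x * y)) * (- (x / y))) * T (p^2) (p^2 * (- (x * y)) / (- (x / y))))"
      unfolding DD_def by (rule T_dup) (use assms in auto)
    moreover have "(- (x * y)) * (- (x / y)) = x^2" using assms by (simp add: field_simps power2_eq_square)
    moreover have "p * (- (x * y)) / (- (x / y)) = p * y^2" using assms by (simp add: field_simps power2_eq_square)
    moreover have "p * (- (x * y)) * (- (x / y)) = p * x^2" using assms by (simp add: field_simps power2_eq_square)
    moreover have "p^2 * (- (x * y)) / (- (x / y)) = p^2 * y^2" using assms by (simp add: field_simps power2_eq_square)
    ultimately show ?thesis by simp
  qed
  have q: "T (p^2) (p^2 * y^2) = T (p^2) (y^2) / y^2"
    by (rule T_quasi[OF np2]) (use assms in auto)
  have d2: "DD p x y = T (p^2) (x^2) * T (p^2) (p * y^2) + (- (x * y)) * (T (p^2) (p * x^2) * (T (p^2) (y^2) / y^2))"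
    using d unfolding q .
  have e: "(- (x * y)) * (T (p^2) (p * x^2) * (T (p^2) (y^2) / y^2)) = - ((x / y) * (T (p^2) (p * x^2) * T (p^2) (y^2)))"
    using assms by (simp add: field_simps power2_eq_square)
  show ?thesis unfolding d2 e by simp
qed

lemma weierstrass:
  assumes "norm p < 1" "p \<noteq> 0" "x \<noteq> 0" "y \<noteq> 0" "u \<noteq> 0" "v \<noteq> 0"
  shows "DD p x y * DD p u v - DD p x v * DD p u y = (u / y) * DD p y v * DD p x u"
proof -
  define A where "A z = T (p^2) (z^2)" for z
  define B where "B z = T (p^2) (p * z^2)" for z
  have D: "DD p a b = A a * B b - (a / b) * (B a * A b)" if "a \<noteq> 0" "b \<noteq> 0" for a b
    unfolding A_def B_def by (rule DD_form) (use assms that in auto)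
  show ?thesis using assms
    by (simp add: D field_simps)
qed

lemma T_refl:
  assumes "norm p < 1" "p \<noteq> 0" "z \<noteq> 0"
  shows "T p (p / z) = T p z"
proof -
  have "T p (p * (1 / z)) = T p (1 / z) / (1 / z)"
    by (rule T_quasi) (use assms in auto)
  also have "\<dots> = T p z" using T_inv[OF assms(1,3)] assms by simp
  finally show ?thesis by simp
qed

lemma main_identity:
  fixes q :: complex
  assumes q0: "q \<noteq> 0" and q1: "norm q < 1"
  shows "(T (q^10) (q^2) * T (q^10) (q^4))^2 - q * (T (q^10) q * T (q^10) (q^3))^2
         = (T (q^10) (- q) * T (q^10) (- (q^3))) * (T (q^10) (- (q^5)))^2"
proof -
  define p where "p = q^10"
  have p1: "norm p < 1" unfolding p_def using q1 by (simp add: norm_power power_less_one_iff)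
  have p0: "p \<noteq> 0" unfolding p_def using q0 by simp
  define t1 where "t1 = T p q"
  define t2 where "t2 = T p (q^2)"
  define t3 where "t3 = T p (q^3)"
  define t4 where "t4 = T p (q^4)"
  define s1 where "s1 = T p (- q)"
  define s3 where "s3 = T p (- (q^3))"
  define s5 where "s5 = T p (- (q^5))"
  have W: "DD p 1 (- q) * DD p (q^5) (- (q^2)) - DD p 1 (- (q^2)) * DD p (q^5) (- q)
           = (q^5 / (- q)) * DD p (- q) (- (q^2)) * DD p 1 (q^5)"
    by (rule weierstrass[OF p1 p0]) (use q0 in auto)
  have d1: "DD p 1 (- q) = t1 * (t1 / q)"
  proof -
    have "DD p 1 (- q) = T p q * T p (1 / q)" by (simp add: DD_def)
    thus ?thesis using T_inv[OF p1 q0] by (simp add: t1_def)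
  qed
  have d2: "DD p (q^5) (- (q^2)) = t3 * t3"
  proof -
    have "- (q^5 * - (q^2)) = p / q^3" using q0 by (simp add: p_def field_simps eval_nat_numeral)
    moreover have "- (q^5 / - (q^2)) = q^3" using q0 by (simp add: field_simps eval_nat_numeral)
    ultimately have "DD p (q^5) (- (q^2)) = T p (p / q^3) * T p (q^3)" by (simp add: DD_def)
    thus ?thesis using T_refl[OF p1 p0, of "q^3"] q0 by (simp add: t3_def)
  qed
  have d3: "DD p 1 (- (q^2)) = t2 * (t2 / q^2)"
  proof -
    have "DD p 1 (- (q^2)) = T p (q^2) * T p (1 / q^2)" by (simp add: DD_def)
    thus ?thesis using T_inv[OF p1, of "q^2"] q0 by (simp add: t2_def)
  qed
  have d4: "DD p (q^5) (- q) = t4 * t4"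
  proof -
    have "- (q^5 * - q) = p / q^4" using q0 by (simp add: p_def field_simps eval_nat_numeral)
    moreover have "- (q^5 / - q) = q^4" using q0 by (simp add: field_simps eval_nat_numeral)
    ultimately have "DD p (q^5) (- q) = T p (p / q^4) * T p (q^4)" by (simp add: DD_def)
    thus ?thesis using T_refl[OF p1 p0, of "q^4"] q0 by (simp add: t4_def)
  qed
  have d5: "DD p (- q) (- (q^2)) = s3 * (s1 / (- q))"
  proof -
    have "- (- q * - (q^2)) = - (q^3)" by (simp add: eval_nat_numeral)
    moreover have "- (- q / - (q^2)) = 1 / (- q)" using q0 by (simp add: field_simps eval_nat_numeral)
    ultimately have "DD p (- q) (- (q^2)) = T p (- (q^3)) * T p (1 / (- q))" by (simp add: DD_def)
    thus ?thesis using T_inv[OF p1, of "- q"] q0 by (simp add: s1_def s3_def)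
  qed
  have d6: "DD p 1 (q^5) = s5 * (s5 / (- (q^5)))"
  proof -
    have "DD p 1 (q^5) = T p (- (q^5)) * T p (1 / (- (q^5)))" by (simp add: DD_def)
    thus ?thesis using T_inv[OF p1, of "- (q^5)"] q0 by (simp add: s5_def)
  qed
  have W2: "t1 * (t1 / q) * (t3 * t3) - t2 * (t2 / q^2) * (t4 * t4) = (q^5 / (- q)) * (s3 * (s1 / (- q))) * (s5 * (s5 / (- (q^5))))"
    using W unfolding d1 d2 d3 d4 d5 d6 .
  have "(t2 * t4)^2 - q * (t1 * t3)^2 = - (q^2) * (t1 * (t1 / q) * (t3 * t3) - t2 * (t2 / q^2) * (t4 * t4))"
    using q0 by (simp add: field_simps power2_eq_square eval_nat_numeral)
  also have "\<dots> = - (q^2) * ((q^5 / (- q)) * (s3 * (s1 / (- q))) * (s5 * (s5 / (- (q^5)))))"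
    unfolding W2 ..
  also have "\<dots> = (s1 * s3) * s5^2"
    using q0 by (simp add: field_simps power2_eq_square eval_nat_numeral)
  finally show ?thesis by (simp add: p_def t1_def t2_def t3_def t4_def s1_def s3_def s5_def)
qed

context
  fixes q :: complex
  assumes q0: "q \<noteq> 0" and q1: "norm q < 1"
begin

lemma nq: "norm (q ^ k) < 1" if "k > 0"
  using q1 that by (simp add: norm_power power_less_one_iff)

lemma M_form: "poch (q^a) (q^10) = poch (q^a) (q^20) * poch (q^(a+10)) (q^20)"
proof -
  have "poch (q^a) (q^10) = (\<Prod>k<2. poch (q^a * (q^10)^k) ((q^10)^2))"
    by (rule poch_split) (use nq in auto)
  also have "\<dots> = (\<Prod>k<2. poch (q^a * (q^10)^k) (q^20))"
  proof -
    have e1: "(q^10)^2 = q^20" by (simp flip: power_mult)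
    show ?thesis by (simp only: e1)
  qed
  also have "\<dots> = poch (q^a) (q^20) * poch (q^(a+10)) (q^20)"
    by (simp add: numeral_2_eq_2 power_add)
  finally show ?thesis .
qed

lemma E_nz: "b > 0 \<Longrightarrow> poch (q^b) (q^20) \<noteq> 0"
proof (rule poch_nz)
  assume "b > 0"
  show "norm (q^20) < 1" by (rule nq) simp
  fix n
  have "norm (q^b * (q^20)^n) < 1"
    using nq[of "b + 20 * n"] \<open>b > 0\<close> by (simp add: power_add power_mult)
  thus "q^b * (q^20)^n \<noteq> 1" by auto
qed

lemma N_form:
  assumes "a > 0"
  shows "poch (- (q^a)) (q^10) = poch (q^(2*a)) (q^20) / (poch (q^a) (q^20) * poch (q^(a+10)) (q^20))"
proof -
  have "poch (q^a) (q^10) * poch (- (q^a)) (q^10) = poch ((q^a)^2) ((q^10)^2)"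
    by (rule poch_double) (use nq in auto)
  hence "poch (q^a) (q^20) * poch (q^(a+10)) (q^20) * poch (- (q^a)) (q^10) = poch (q^(2*a)) (q^20)"
    by (simp add: M_form power_mult[symmetric] mult.commute)
  moreover have "poch (q^a) (q^20) * poch (q^(a+10)) (q^20) \<noteq> 0"
    using E_nz assms by simp
  ultimately show ?thesis by (simp add: field_simps)
qed

lemma qf_E:
  assumes "m > 0" "c * m = 20"
  shows "qf m q = (\<Prod>k<c. poch (q^(m*(k+1))) (q^20))"
proof -
  have c0: "c > 0" using assms by (cases c) auto
  have "qf m q = poch (q^m) (q^m)" by (rule qf_poch)
  also have "\<dots> = (\<Prod>k<c. poch (q^m * (q^m)^k) ((q^m)^c))"
    by (rule poch_split) (use nq assms c0 in auto)
  also have "\<dots> = (\<Prod>k<c. poch (q^(m*(k+1))) (q^20))"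
    using assms(2) by (simp add: power_mult[symmetric] power_add[symmetric] algebra_simps)
  finally show ?thesis .
qed

lemma T_pos_form:
  assumes "0 < a" "a < 10"
  shows "T (q^10) (q^a) = poch (- (q^a)) (q^10) * poch (- (q^(10-a))) (q^10) * poch (q^10) (q^10)"
proof -
  have "T (q^10) (q^a) = poch (- (q^a)) (q^10) * poch (- (q^10 / q^a)) (q^10) * poch (q^10) (q^10)"
    by (rule jtp) (use nq q0 in auto)
  moreover have "q^10 / q^a = q^(10 - a)" using q0 assms by (simp add: power_diff)
  ultimately show ?thesis by simp
qed

lemma T_neg_form:
  assumes "0 < a" "a < 10"
  shows "T (q^10) (- (q^a)) = poch (q^a) (q^10) * poch (q^(10-a)) (q^10) * poch (q^10) (q^10)"
proof -
  have "T (q^10) (- (q^a)) = poch (- (- (q^a))) (q^10) * poch (- (q^10 / - (q^a))) (q^10) * poch (q^10) (q^10)"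
    by (rule jtp) (use nq q0 in auto)
  moreover have "- (q^10 / - (q^a)) = q^(10 - a)" using q0 assms by (simp add: power_diff)
  ultimately show ?thesis by simp
qed

lemma qf1: "qf 1 q = poch (q^1) (q^20) * poch (q^2) (q^20) * poch (q^3) (q^20) * poch (q^4) (q^20) * poch (q^5) (q^20)
  * poch (q^6) (q^20) * poch (q^7) (q^20) * poch (q^8) (q^20) * poch (q^9) (q^20) * poch (q^10) (q^20)
  * poch (q^11) (q^20) * poch (q^12) (q^20) * poch (q^13) (q^20) * poch (q^14) (q^20) * poch (q^15) (q^20)
  * poch (q^16) (q^20) * poch (q^17) (q^20) * poch (q^18) (q^20) * poch (q^19) (q^20) * poch (q^20) (q^20)"
  using qf_E[of 1 20] by (simp add: eval_nat_numeral mult_ac)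

lemma qf2: "qf 2 q = poch (q^2) (q^20) * poch (q^4) (q^20) * poch (q^6) (q^20) * poch (q^8) (q^20) * poch (q^10) (q^20)
  * poch (q^12) (q^20) * poch (q^14) (q^20) * poch (q^16) (q^20) * poch (q^18) (q^20) * poch (q^20) (q^20)"
  using qf_E[of 2 10] by (simp add: eval_nat_numeral mult_ac)

lemma qf4: "qf 4 q = poch (q^4) (q^20) * poch (q^8) (q^20) * poch (q^12) (q^20) * poch (q^16) (q^20) * poch (q^20) (q^20)"
  using qf_E[of 4 5] by (simp add: eval_nat_numeral mult_ac)

lemma qf5: "qf 5 q = poch (q^5) (q^20) * poch (q^10) (q^20) * poch (q^15) (q^20) * poch (q^20) (q^20)"
  using qf_E[of 5 4] by (simp add: eval_nat_numeral mult_ac)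

lemma qf10: "qf 10 q = poch (q^10) (q^20) * poch (q^20) (q^20)"
  using qf_E[of 10 2] by (simp add: eval_nat_numeral mult_ac)

lemma qf20: "qf 20 q = poch (q^20) (q^20)"
  using qf_E[of 20 1] by simp

end

context
  fixes q :: complex
  assumes q0: "q \<noteq> 0" and q1: "norm q < 1"
begin

lemma E_nz': "b > 0 \<Longrightarrow> poch (q^b) (q^20) \<noteq> 0"
  by (rule E_nz[OF q0 q1])

lemma E1_nz: "poch q (q^20) \<noteq> 0"
  using E_nz'[of 1] by simp

lemmas Esimps = M_form[OF q0 q1] N_form[OF q0 q1] T_pos_form[OF q0 q1] T_neg_form[OF q0 q1]
  qf1[OF q0 q1] qf2[OF q0 q1] qf4[OF q0 q1] qf5[OF q0 q1] qf10[OF q0 q1] qf20[OF q0 q1]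

lemmas qfs = qf1[OF q0 q1] qf2[OF q0 q1] qf4[OF q0 q1] qf5[OF q0 q1] qf10[OF q0 q1] qf20[OF q0 q1]

lemma prod_C: "T (q^10) (q^2) * T (q^10) (q^4) = qf 4 q * (qf 10 q)^3 / (qf 2 q * qf 20 q)"
  unfolding qfs T_pos_form[OF q0 q1, of 2, simplified] T_pos_form[OF q0 q1, of 4, simplified]
  by (simp add: Esimps E_nz' E1_nz field_simps) (simp add: power3_eq_cube power2_eq_square mult_ac)

lemma prod_D: "T (q^10) q * T (q^10) (q^3) = (qf 2 q)^2 * qf 5 q * qf 20 q / (qf 1 q * qf 4 q)"
proof -
  have a: "T (q^10) q = poch (- q) (q^10) * poch (- (q^9)) (q^10) * poch (q^10) (q^10)"
    using T_pos_form[OF q0 q1, of 1] by simp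
  have b: "poch (- q) (q^10) = poch (q^2) (q^20) / (poch q (q^20) * poch (q^11) (q^20))"
    using N_form[OF q0 q1, of 1] by simp
  show ?thesis unfolding a b qfs T_pos_form[OF q0 q1, of 3, simplified]
    by (simp add: Esimps E_nz' E1_nz field_simps) (simp add: power3_eq_cube power2_eq_square mult_ac)
qed

lemma prod_A: "T (q^10) (- q) * T (q^10) (- (q^3)) = qf 1 q * (qf 10 q)^3 / (qf 2 q * qf 5 q)"
proof -
  have a: "T (q^10) (- q) = poch q (q^10) * poch (q^9) (q^10) * poch (q^10) (q^10)"
    using T_neg_form[OF q0 q1, of 1] by simp
  have b: "poch q (q^10) = poch q (q^20) * poch (q^11) (q^20)"
    using M_form[OF q0 q1, of 1] by simp
  show ?thesis unfolding a b qfs T_neg_form[OF q0 q1, of 3, simplified]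
    by (simp add: Esimps E_nz' E1_nz field_simps) (simp add: power3_eq_cube power2_eq_square mult_ac)
qed

lemma prod_B: "T (q^10) (- (q^5)) = (qf 5 q)^2 / qf 10 q"
  unfolding qfs T_neg_form[OF q0 q1, of 5, simplified]
  by (simp add: Esimps E_nz' E1_nz field_simps) (simp add: power3_eq_cube power2_eq_square mult_ac)

end

lemma qf_nz:
  fixes q :: complex
  assumes "norm q < 1" "m > 0"
  shows "qf m q \<noteq> 0"
proof -
  have n: "norm (q^m) < 1" using assms by (simp add: norm_power power_less_one_iff)
  show ?thesis unfolding qf_poch
  proof (rule poch_nz[OF n])
    fix n
    have "norm (q^(m + m * n)) < 1"
      using assms by (simp add: norm_power power_less_one_iff)
    moreover have "q^(m + m * n) = q^m * (q^m)^n" by (simp add: power_add power_mult)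
    ultimately show "q^m * (q^m)^n \<noteq> 1" by auto
  qed
qed

lemma final_algebra:
  fixes q f1 f2 f4 f5 f10 f20 :: complex
  assumes nz: "q \<noteq> 0" "f1 \<noteq> 0" "f2 \<noteq> 0" "f4 \<noteq> 0" "f5 \<noteq> 0" "f10 \<noteq> 0" "f20 \<noteq> 0"
  assumes MI: "(f4 * f10^3 / (f2 * f20))^2 - q * (f2^2 * f5 * f20 / (f1 * f4))^2 = (f1 * f10^3 / (f2 * f5)) * (f5^2 / f10)^2"
  shows "f1^2 * f4^2 * f10^2 / (q * f2^2 * f5^2 * f20^2) - f2^4 * f20^2 / (f4^2 * f10^4)
         = f1^3 * f5 / (q * f2 * f10^3)"
proof -
  define K where "K = f1^2 / (q * f5^2 * f10^4)"
  have "f1^2 * f4^2 * f10^2 / (q * f2^2 * f5^2 * f20^2) - f2^4 * f20^2 / (f4^2 * f10^4)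
      = ((f4 * f10^3 / (f2 * f20))^2 - q * (f2^2 * f5 * f20 / (f1 * f4))^2) * K"
    using nz unfolding K_def by (simp add: field_simps)
  also have "\<dots> = (f1 * f10^3 / (f2 * f5)) * (f5^2 / f10)^2 * K" unfolding MI ..
  also have "\<dots> = f1^3 * f5 / (q * f2 * f10^3)"
    using nz unfolding K_def by (simp add: field_simps) (simp add: algebra_simps power2_eq_square eval_nat_numeral)
  finally show ?thesis .
qed

theorem lemma2p6:
  fixes q :: complex
  assumes "0 < norm q" and "norm q < 1"
  shows "(qf 1 q)^2 * (qf 4 q)^2 * (qf 10 q)^2 / (q * (qf 2 q)^2 * (qf 5 q)^2 * (qf 20 q)^2)
         - (qf 2 q)^4 * (qf 20 q)^2 / ((qf 4 q)^2 * (qf 10 q)^4)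
         = (qf 1 q)^3 * qf 5 q / (q * qf 2 q * (qf 10 q)^3)"
proof -
  have q0: "q \<noteq> 0" using assms(1) by auto
  have MI: "(qf 4 q * (qf 10 q)^3 / (qf 2 q * qf 20 q))^2 - q * ((qf 2 q)^2 * qf 5 q * qf 20 q / (qf 1 q * qf 4 q))^2
         = (qf 1 q * (qf 10 q)^3 / (qf 2 q * qf 5 q)) * ((qf 5 q)^2 / qf 10 q)^2"
    using main_identity[OF q0 assms(2)]
    unfolding prod_C[OF q0 assms(2)] prod_D[OF q0 assms(2)] prod_A[OF q0 assms(2)] prod_B[OF q0 assms(2)] .
  show ?thesis
    by (rule final_algebra[OF q0 _ _ _ _ _ _ MI]) (use qf_nz[OF assms(2)] in auto)
qed

end
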